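(* Let $(M,g,J)$ be a Kaehler manifold, $p\in M$, and let $\{v,w\}$ and $\{x,y\}$ be orthonormal pairs in $T_pM$, $\pi=\mathrm{span}\{v,w\}$. For $\varepsilon\in\mathbb{R}$ set $A=x\wedge_gy+Jx\wedge_gJy$, $v_\varepsilon=v+\varepsilon Av$, $w_\varepsilon=w+\varepsilon Aw$ and $\pi_\varepsilon=\mathrm{span}\{v_\varepsilon,w_\varepsilon\}$. Then, as $\varepsilon\to0$, $$K(p,\pi_\varepsilon)=K(p,\pi)+\varepsilon\,Q^c(g,R)(v,w,w,v;x,y)+O(\varepsilon^2).$$
   Context: A Kaehler manifold $(M,g,J)$: $J^2=-\mathrm{Id}$, $g(JX,JY)=g(X,Y)$, $\nabla J=0$. Curvature: $R(X,Y)Z=\nabla_X\nabla_YZ-\nabla_Y\nabla_XZ-\nabla_{[X,Y]}Z$, $R(X,Y,Z,W)=g(R(X,Y)Z,W)$; the sectional curvature of the plane spanned by linearly independent $a,b$ is $K(p,\mathrm{span}\{a,b\})=R(a,b,b,a)/(g(a,a)g(b,b)-g(a,b)^2)$. For vectors $X,Y$, $X\wedge_gY$ is the endomorphism $Z\mapsto g(Y,Z)X-g(X,Z)Y$, and $(X\wedge^c_gY)Z=(X\wedge_gY)Z+(JX\wedge_gJY)Z-2g(JX,Y)JZ$. For an endomorphism $B$, $(B\cdot R)(X_1,\dots,X_4)=-R(BX_1,X_2,X_3,X_4)-R(X_1,BX_2,X_3,X_4)-R(X_1,X_2,BX_3,X_4)-R(X_1,X_2,X_3,BX_4)$. The complex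 Tachibana tensor is $Q^c(g,R)(X_1,X_2,X_3,X_4;X,Y)=-((X\wedge^c_gY)\cdot R)(X_1,X_2,X_3,X_4)$. *)

theory Defs
  imports "HOL-Analysis.Analysis" "HOL-Library.Landau_Symbols"
begin

text \<open>Pointwise model: the tangent space T_pM is a finite-dimensional real inner
product space 'v (euclidean_space), g is its inner product, J is the complex
structure at p and R is the (0,4) curvature tensor R(X,Y,Z,W) = g(R(X,Y)Z,W) at p.\<close>

definition hermitian_cs :: "('v::euclidean_space \<Rightarrow> 'v) \<Rightarrow> bool" where
  "hermitian_cs J \<longleftrightarrow> linear J \<and> (\<forall>X. J (J X) = - X) \<and> (\<forall>X Y. inner (J X) (J Y) = inner X Y)"

text \<open>Algebraic properties of the curvature tensor of a Kaehler manifold at a point: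
multilinearity, the standard symmetries, first Bianchi identity, and the Kaehler
identity coming from nabla J = 0 (R(X,Y) commutes with J).\<close>
definition kaehler_curvature ::
  "('v::euclidean_space \<Rightarrow> 'v) \<Rightarrow> ('v \<Rightarrow> 'v \<Rightarrow> 'v \<Rightarrow> 'v \<Rightarrow> real) \<Rightarrow> bool" where
  "kaehler_curvature J R \<longleftrightarrow>
     (\<forall>Y Z W. linear (\<lambda>X. R X Y Z W)) \<and>
     (\<forall>X Z W. linear (\<lambda>Y. R X Y Z W)) \<and>
     (\<forall>X Y W. linear (\<lambda>Z. R X Y Z W)) \<and>
     (\<forall>X Y Z. linear (\<lambda>W. R X Y Z W)) \<and>
     (\<forall>X Y Z W. R X Y Z W = - R Y X Z W) \<and>
     (\<forall>X Y Z W. R X Y Z W = - R X Y W Z) \<and>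
     (\<forall>X Y Z W. R X Y Z W + R Y Z X W + R Z X Y W = 0) \<and>
     (\<forall>X Y Z W. R X Y (J Z) (J W) = R X Y Z W)"

definition wedge :: "'v::real_inner \<Rightarrow> 'v \<Rightarrow> 'v \<Rightarrow> 'v" where
  "wedge X Y Z = inner Y Z *\<^sub>R X - inner X Z *\<^sub>R Y"

definition cwedge :: "('v::real_inner \<Rightarrow> 'v) \<Rightarrow> 'v \<Rightarrow> 'v \<Rightarrow> 'v \<Rightarrow> 'v" where
  "cwedge J X Y Z = wedge X Y Z + wedge (J X) (J Y) Z - (2 * inner (J X) Y) *\<^sub>R J Z"

definition endo_act :: "('v \<Rightarrow> 'v) \<Rightarrow> ('v \<Rightarrow> 'v \<Rightarrow> 'v \<Rightarrow> 'v \<Rightarrow> real) \<Rightarrow> 'v \<Rightarrow> 'v \<Rightarrow> 'v \<Rightarrow> 'v \<Rightarrow> real" where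
  "endo_act B R X1 X2 X3 X4 =
     - R (B X1) X2 X3 X4 - R X1 (B X2) X3 X4 - R X1 X2 (B X3) X4 - R X1 X2 X3 (B X4)"

definition tachibana_c ::
  "('v::real_inner \<Rightarrow> 'v) \<Rightarrow> ('v \<Rightarrow> 'v \<Rightarrow> 'v \<Rightarrow> 'v \<Rightarrow> real) \<Rightarrow> 'v \<Rightarrow> 'v \<Rightarrow> 'v \<Rightarrow> 'v \<Rightarrow> 'v \<Rightarrow> 'v \<Rightarrow> real" where
  "tachibana_c J R X1 X2 X3 X4 X Y = - endo_act (cwedge J X Y) R X1 X2 X3 X4"

definition sec_curv :: "('v::real_inner \<Rightarrow> 'v \<Rightarrow> 'v \<Rightarrow> 'v \<Rightarrow> real) \<Rightarrow> 'v \<Rightarrow> 'v \<Rightarrow> real" where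
  "sec_curv R a b = R a b b a / (inner a a * inner b b - (inner a b)\<^sup>2)"

end

theory Submission
  imports Defs
begin

lemma aux_div:
  fixes D e N c X :: real
  assumes "D \<noteq> 0" "e \<noteq> 0" "N - c*D = e\<^sup>2 * X"
  shows "X / D = (N / D - c) / e\<^sup>2"
proof -
  have "N / D - c = (N - c*D) / D" using assms(1) by (simp add: field_simps)
  also have "\<dots> = e\<^sup>2 * X / D" using assms(3) by simp
  finally show ?thesis using assms(2) by simp
qed

lemma poly_ratio_bigo:
  fixes n0 n1 n2 n3 n4 d2 d3 d4 :: real
  shows "(\<lambda>e::real. (n0 + e*n1 + e^2*n2 + e^3*n3 + e^4*n4) / (1 + e^2*d2 + e^3*d3 + e^4*d4) - n0 - e*n1)
         \<in> O[at 0](\<lambda>e. e\<^sup>2)"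
proof (rule bigoI_tendsto)
  let ?D = "\<lambda>e::real. 1 + e^2*d2 + e^3*d3 + e^4*d4"
  let ?P = "\<lambda>e::real. ((n2 + e*n3 + e^2*n4) - (n0 + e*n1)*(d2 + e*d3 + e^2*d4)) / ?D e"
  have limD: "(?D \<longlongrightarrow> 1) (at 0)"
    by (rule tendsto_eq_intros refl | simp)+
  have evD: "eventually (\<lambda>e. ?D e \<noteq> 0) (at 0)"
    using tendsto_imp_eventually_ne[OF limD, of 0] by simp
  have lim: "(?P \<longlongrightarrow> ?P 0) (at 0)"
    by (rule tendsto_eq_intros refl limD | simp)+
  have ev: "eventually (\<lambda>e. ?P e = ((n0 + e*n1 + e^2*n2 + e^3*n3 + e^4*n4) / ?D e - n0 - e*n1) / e\<^sup>2) (at 0)"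
    using evD eventually_at_filter[of "\<lambda>e. e \<noteq> 0" 0 UNIV]
  proof -
    have "eventually (\<lambda>e::real. e \<noteq> 0) (at 0)" by (simp add: eventually_at_filter)
    with evD show ?thesis
    proof eventually_elim
      case (elim e)
      then have e: "e \<noteq> 0" and D: "?D e \<noteq> 0" by auto
      have "(n0 + e*n1 + e^2*n2 + e^3*n3 + e^4*n4) - (n0 + e*n1) * ?D e
            = e\<^sup>2 * ((n2 + e*n3 + e^2*n4) - (n0 + e*n1)*(d2 + e*d3 + e^2*d4))"
        by (simp add: algebra_simps power2_eq_square power3_eq_cube power4_eq_xxxx)
      from aux_div[OF D e this] show ?case by (simp only: diff_diff_eq)
    qed
  qed
  show "((\<lambda>e. ((n0 + e*n1 + e^2*n2 + e^3*n3 + e^4*n4) / ?D e - n0 - e*n1) / e\<^sup>2) \<longlongrightarrow> ?P 0) (at 0)"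
    using Lim_transform_eventually[OF lim ev] .
  show "eventually (\<lambda>e::real. e\<^sup>2 \<noteq> 0) (at 0)" by (simp add: eventually_at_filter)
qed


lemma pair_sym:
  fixes R :: "'v \<Rightarrow> 'v \<Rightarrow> 'v \<Rightarrow> 'v \<Rightarrow> real"
  assumes a1: "\<And>X Y Z W. R X Y Z W = - R Y X Z W"
    and a2: "\<And>X Y Z W. R X Y Z W = - R X Y W Z"
    and b: "\<And>X Y Z W. R X Y Z W + R Y Z X W + R Z X Y W = 0"
  shows "R X Y Z W = R Z W X Y"
proof -
  have 1: "R X Y Z W + R Y Z X W + R Z X Y W = 0" by (rule b)
  have 2: "R Y Z W X + R Z W Y X + R W Y Z X = 0" by (rule b)
  have 3: "R Z W X Y + R W X Z Y + R X Z W Y = 0" by (rule b)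
  have 4: "R W X Y Z + R X Y W Z + R Y W X Z = 0" by (rule b)
  have "R Y Z W X = R Y Z X W * -1" using a2[of Y Z W X] by simp
  moreover have "R Z W Y X = - R Z W X Y" using a2[of Z W Y X] by simp
  moreover have "R W Y Z X = R Y W X Z" using a1[of W Y Z X] a2[of Y W Z X] by simp
  moreover have "R W X Z Y = - R W X Y Z" using a2[of W X Z Y] by simp
  moreover have "R X Z W Y = R Z X Y W" using a1[of X Z W Y] a2[of Z X W Y] by simp
  moreover have "R X Y W Z = - R X Y Z W" using a2[of X Y W Z] by simp
  ultimately show ?thesis using 1 2 3 4 by linarith
qed

theorem mainTheorem6:
  fixes J :: "'v::euclidean_space \<Rightarrow> 'v"
    and R :: "'v \<Rightarrow> 'v \<Rightarrow> 'v \<Rightarrow> 'v \<Rightarrow> real"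
    and v w x y :: 'v
  assumes "hermitian_cs J"
    and "kaehler_curvature J R"
    and "inner v v = 1" "inner w w = 1" "inner v w = 0"
    and "inner x x = 1" "inner y y = 1" "inner x y = 0"
  shows "(\<lambda>\<epsilon>::real.
            let A = (\<lambda>Z. wedge x y Z + wedge (J x) (J y) Z);
                v\<epsilon> = v + \<epsilon> *\<^sub>R A v;
                w\<epsilon> = w + \<epsilon> *\<^sub>R A w
            in sec_curv R v\<epsilon> w\<epsilon> - sec_curv R v w - \<epsilon> * tachibana_c J R v w w v x y)
         \<in> O[at 0](\<lambda>\<epsilon>. \<epsilon>\<^sup>2)"
proof -
  note K = assms(2)[unfolded kaehler_curvature_def]
  have linJ: "linear J" and JJ: "\<And>X. J (J X) = - X" using assms(1) unfolding hermitian_cs_def by auto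
  have l1: "linear (\<lambda>X. R X Y Z W)" for Y Z W using K[THEN conjunct1] by blast
  have l2: "linear (\<lambda>Y. R X Y Z W)" for X Z W using K[THEN conjunct2, THEN conjunct1] by blast
  have l3: "linear (\<lambda>Z. R X Y Z W)" for X Y W using K[THEN conjunct2, THEN conjunct2, THEN conjunct1] by blast
  have l4: "linear (\<lambda>W. R X Y Z W)" for X Y Z using K[THEN conjunct2, THEN conjunct2, THEN conjunct2, THEN conjunct1] by blast
  note K5 = K[THEN conjunct2, THEN conjunct2, THEN conjunct2, THEN conjunct2]
  have as1: "\<And>X Y Z W. R X Y Z W = - R Y X Z W" using K5[THEN conjunct1] by blast
  have as2: "\<And>X Y Z W. R X Y Z W = - R X Y W Z" using K5[THEN conjunct2, THEN conjunct1] by blast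
  have bi: "\<And>X Y Z W. R X Y Z W + R Y Z X W + R Z X Y W = 0" using K5[THEN conjunct2, THEN conjunct2, THEN conjunct1] by blast
  have kj: "\<And>X Y Z W. R X Y (J Z) (J W) = R X Y Z W" using K5[THEN conjunct2, THEN conjunct2, THEN conjunct2] by blast
  have ps: "\<And>X Y Z W. R X Y Z W = R Z W X Y" by (rule pair_sym[OF as1 as2 bi])
  have Radd: "R (X1 + X2) Y Z W = R X1 Y Z W + R X2 Y Z W"
     "R X (Y1 + Y2) Z W = R X Y1 Z W + R X Y2 Z W"
     "R X Y (Z1 + Z2) W = R X Y Z1 W + R X Y Z2 W"
     "R X Y Z (W1 + W2) = R X Y Z W1 + R X Y Z W2"
     "R (c *\<^sub>R X) Y Z W = c * R X Y Z W"
     "R X (c *\<^sub>R Y) Z W = c * R X Y Z W"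
     "R X Y (c *\<^sub>R Z) W = c * R X Y Z W"
     "R X Y Z (c *\<^sub>R W) = c * R X Y Z W"
     "R X Y Z (- W) = - R X Y Z W"
    for X X1 X2 Y Y1 Y2 Z Z1 Z2 W W1 W2 c
    using linear_add[OF l1] linear_add[OF l2] linear_add[OF l3] linear_add[OF l4]
      linear_scale[OF l1] linear_scale[OF l2] linear_scale[OF l3] linear_scale[OF l4]
      linear_neg[OF l4] by auto
  have Rdiff: "R (X1 - X2) Y Z W = R X1 Y Z W - R X2 Y Z W"
     "R X (Y1 - Y2) Z W = R X Y1 Z W - R X Y2 Z W"
     "R X Y (Z1 - Z2) W = R X Y Z1 W - R X Y Z2 W"
     "R X Y Z (W1 - W2) = R X Y Z W1 - R X Y Z W2"
    for X X1 X2 Y Y1 Y2 Z Z1 Z2 W W1 W2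
    using linear_diff[OF l1] linear_diff[OF l2] linear_diff[OF l3] linear_diff[OF l4] by auto
  have jswap: "R X Y (J Z) W = - R X Y Z (J W)" for X Y Z W
  proof -
    have "R X Y (J Z) W = R X Y (J Z) (- J (J W))" using JJ by simp
    also have "\<dots> = - R X Y (J Z) (J (J W))" by (simp add: Radd)
    also have "\<dots> = - R X Y Z (J W)" by (simp add: kj)
    finally show ?thesis .
  qed
  define A where "A = (\<lambda>Z. wedge x y Z + wedge (J x) (J y) Z)"
  define a where "a = A v"
  define b where "b = A w"
  have va: "inner v a = 0" unfolding a_def A_def wedge_def
    by (simp add: inner_add_right inner_diff_right inner_commute)
  have wb: "inner w b = 0" unfolding b_def A_def wedge_def
    by (simp add: inner_add_right inner_diff_right inner_commute)
  have vb: "inner v b + inner a w = 0" unfolding a_def b_def A_def wedge_def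
    by (simp add: inner_add_right inner_diff_right inner_add_left inner_diff_left inner_commute)
  define n0 where "n0 = R v w w v"
  define n1 where "n1 = R a w w v + R v b w v + R v w b v + R v w w a"
  define n2 where "n2 = R a b w v + R a w b v + R a w w a + R v b b v + R v b w a + R v w b a"
  define n3 where "n3 = R a b b v + R a b w a + R a w b a + R v b b a"
  define n4 where "n4 = R a b b a"
  define d2 where "d2 = inner a a + inner b b"
  define d4 where "d4 = inner a a * inner b b - (inner a b)\<^sup>2"
  have sec0: "sec_curv R v w = n0" unfolding sec_curv_def n0_def using assms(3-5) by simp
  have Jterm: "R (J v) w w v + R v (J w) w v + R v w (J w) v + R v w w (J v) = 0"
  proof -
    have "R v w (J w) v + R v w w (J v) = 0" using jswap[of v w w v] by simp
    moreover have "R (J v) w w v + R v (J w) w v = 0"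
      using ps[of "J v" w w v] ps[of v "J w" w v] jswap[of w v v w] by simp
    ultimately show ?thesis by simp
  qed
  have tach: "tachibana_c J R v w w v x y = n1"
  proof -
    have cw: "cwedge J x y Z = A Z - (2 * inner (J x) y) *\<^sub>R J Z" for Z
      unfolding cwedge_def A_def by simp
    have "tachibana_c J R v w w v x y = n1 - (2 * inner (J x) y) *
        (R (J v) w w v + R v (J w) w v + R v w (J w) v + R v w w (J v))"
      unfolding tachibana_c_def endo_act_def cw n1_def a_def b_def
      by (simp add: Rdiff Radd algebra_simps)
    thus ?thesis using Jterm by simp
  qed
  have sec: "sec_curv R (v + e *\<^sub>R a) (w + e *\<^sub>R b) =
      (n0 + e*n1 + e^2*n2 + e^3*n3 + e^4*n4) / (1 + e^2*d2 + e^3*0 + e^4*d4)" for e :: real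
  proof -
    have num: "R (v + e *\<^sub>R a) (w + e *\<^sub>R b) (w + e *\<^sub>R b) (v + e *\<^sub>R a)
        = n0 + e*n1 + e^2*n2 + e^3*n3 + e^4*n4"
      unfolding n0_def n1_def n2_def n3_def n4_def
      apply (simp only: Radd)
      apply (simp only: power2_eq_square power3_eq_cube power4_eq_xxxx)
      by algebra
    have i1: "inner (v + e *\<^sub>R a) (v + e *\<^sub>R a) = 1 + e^2 * inner a a"
      using assms(3) va by (simp add: inner_add_left inner_add_right inner_commute power2_eq_square)
    have i2: "inner (w + e *\<^sub>R b) (w + e *\<^sub>R b) = 1 + e^2 * inner b b"
      using assms(4) wb by (simp add: inner_add_left inner_add_right inner_commute power2_eq_square)
    have i3: "inner (v + e *\<^sub>R a) (w + e *\<^sub>R b) = e^2 * inner a b"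
    proof -
      have "inner (v + e *\<^sub>R a) (w + e *\<^sub>R b) = inner v w + e * (inner v b + inner a w) + e^2 * inner a b"
        by (simp add: inner_add_left inner_add_right algebra_simps power2_eq_square)
      thus ?thesis using assms(5) vb by simp
    qed
    have den: "(1 + e^2 * inner a a) * (1 + e^2 * inner b b) - (e^2 * inner a b)\<^sup>2
        = 1 + e^2*d2 + e^3*0 + e^4*d4"
      unfolding d2_def d4_def by (simp add: algebra_simps power2_eq_square power4_eq_xxxx)
    show ?thesis unfolding sec_curv_def num i1 i2 i3 den ..
  qed
  have "(\<lambda>\<epsilon>::real.
            let A = (\<lambda>Z. wedge x y Z + wedge (J x) (J y) Z);
                v\<epsilon> = v + \<epsilon> *\<^sub>R A v;
                w\<epsilon> = w + \<epsilon> *\<^sub>R A w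
            in sec_curv R v\<epsilon> w\<epsilon> - sec_curv R v w - \<epsilon> * tachibana_c J R v w w v x y)
      = (\<lambda>e::real. (n0 + e*n1 + e^2*n2 + e^3*n3 + e^4*n4) / (1 + e^2*d2 + e^3*0 + e^4*d4) - n0 - e*n1)"
    unfolding Let_def A_def[symmetric] a_def[symmetric] b_def[symmetric] sec sec0 tach by simp
  thus ?thesis using poly_ratio_bigo[of n0 n1 n2 n3 n4 d2 0 d4] by (simp only:)
qed

end
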